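(* Let $M=(E,r)$ be a matroid with $|E|\ge 2$ and let $e\in E$. Then (i) if $e$ is neither a loop nor a coloop, $Q'_M(x,y)=x\,Q'_{M\setminus e}(x,y)+y\,Q'_{M/e}(x,y)$; (ii) if $e$ is a loop or a coloop, $Q'_M(x,y)=(x+y-1)\,Q'_{M/e}(x,y)=(x+y-1)\,Q'_{M\setminus e}(x,y)$.
   Context: $M\setminus e$ and $M/e$ denote the usual matroid deletion and contraction (matroids on $E\setminus\{e\}$). For a polymatroid (in particular a matroid) $N$ on a nonempty ground set $F$, with base polytope $P(N)\subseteq\mathbb R^F$ (for a matroid, the convex hull of indicator vectors of bases), let $\Delta_F=\operatorname{conv}\{\mathbf e_i:i\in F\}$, $\nabla_F=-\Delta_F$, and $Q_N(t,u)=\#\big((P(N)+u\Delta_F+t\nabla_F)\cap\mathbb Z^F\big)$ for integers $t,u\ge0$. This is a polynomial; write $Q_N(t,u)=\sum_{i,j}c_{ij}\binom{u}{j}\binom{t}{i}$ and define $Q'_N(x,y)=\sum_{i,j}c_{ij}(x-1)^i(y-1)^j$. *)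

theory Defs
  imports Complex_Main
begin

definition matroid_rank :: "'a set \<Rightarrow> ('a set \<Rightarrow> nat) \<Rightarrow> bool" where
  "matroid_rank E r \<longleftrightarrow> finite E \<and>
     (\<forall>X. X \<subseteq> E \<longrightarrow> r X \<le> card X) \<and>
     (\<forall>X Y. X \<subseteq> Y \<and> Y \<subseteq> E \<longrightarrow> r X \<le> r Y) \<and>
     (\<forall>X Y. X \<subseteq> E \<and> Y \<subseteq> E \<longrightarrow> r (X \<union> Y) + r (X \<inter> Y) \<le> r X + r Y)"

definition is_loop :: "'a set \<Rightarrow> ('a set \<Rightarrow> nat) \<Rightarrow> 'a \<Rightarrow> bool" where
  "is_loop E r e \<longleftrightarrow> e \<in> E \<and> r {e} = 0"

definition is_coloop :: "'a set \<Rightarrow> ('a set \<Rightarrow> nat) \<Rightarrow> 'a \<Rightarrow> bool" where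
  "is_coloop E r e \<longleftrightarrow> e \<in> E \<and> r (E - {e}) < r E"

text \<open>Deletion M \ e: ground set E - {e}, rank r restricted.  Contraction M / e: ground set
  E - {e}, rank X \<mapsto> r (X \<union> {e}) - r {e}.\<close>
definition delete_rank :: "('a set \<Rightarrow> nat) \<Rightarrow> 'a \<Rightarrow> 'a set \<Rightarrow> nat" where
  "delete_rank r e = r"

definition contract_rank :: "('a set \<Rightarrow> nat) \<Rightarrow> 'a \<Rightarrow> 'a set \<Rightarrow> nat" where
  "contract_rank r e = (\<lambda>X. r (X \<union> {e}) - r {e})"

definition bases :: "'a set \<Rightarrow> ('a set \<Rightarrow> nat) \<Rightarrow> 'a set set" where
  "bases E r = {B. B \<subseteq> E \<and> r B = card B \<and> card B = r E}"

text \<open>Vectors in R^F are represented as functions 'a \<Rightarrow> real (vanishing outside F).\<close>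
definition indic :: "'a set \<Rightarrow> 'a \<Rightarrow> real" where
  "indic B = (\<lambda>a. if a \<in> B then 1 else 0)"

definition conv_hull_fun :: "('a \<Rightarrow> real) set \<Rightarrow> ('a \<Rightarrow> real) set" where
  "conv_hull_fun S = {z. \<exists>T w. finite T \<and> T \<noteq> {} \<and> T \<subseteq> S \<and> (\<forall>v\<in>T. 0 \<le> w v) \<and>
       sum w T = 1 \<and> z = (\<lambda>a. \<Sum>v\<in>T. w v * v a)}"

definition mink_sum :: "('a \<Rightarrow> real) set \<Rightarrow> ('a \<Rightarrow> real) set \<Rightarrow> ('a \<Rightarrow> real) set" where
  "mink_sum A B = {(\<lambda>a. x a + y a) | x y. x \<in> A \<and> y \<in> B}"

definition scale_set :: "real \<Rightarrow> ('a \<Rightarrow> real) set \<Rightarrow> ('a \<Rightarrow> real) set" where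
  "scale_set c S = (\<lambda>v a. c * v a) ` S"

definition base_polytope :: "'a set \<Rightarrow> ('a set \<Rightarrow> nat) \<Rightarrow> ('a \<Rightarrow> real) set" where
  "base_polytope E r = conv_hull_fun (indic ` bases E r)"

definition simplex_Delta :: "'a set \<Rightarrow> ('a \<Rightarrow> real) set" where
  "simplex_Delta F = conv_hull_fun ((\<lambda>i. indic {i}) ` F)"

definition simplex_nabla :: "'a set \<Rightarrow> ('a \<Rightarrow> real) set" where
  "simplex_nabla F = scale_set (-1) (simplex_Delta F)"

definition Q_count :: "'a set \<Rightarrow> ('a set \<Rightarrow> nat) \<Rightarrow> nat \<Rightarrow> nat \<Rightarrow> nat" where
  "Q_count E r t u = card {z :: 'a \<Rightarrow> int. (\<forall>a. a \<notin> E \<longrightarrow> z a = 0) \<and>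
     (\<lambda>a. real_of_int (z a)) \<in>
       mink_sum (mink_sum (base_polytope E r) (scale_set (real u) (simplex_Delta E)))
                (scale_set (real t) (simplex_nabla E))}"

text \<open>The coefficients c_ij of Q in the basis binom(u,j) binom(t,i) (i indexes t, j indexes u):
  the (unique) finitely supported c with Q(t,u) = sum c_ij binom(u,j) binom(t,i) for all t,u \<ge> 0.\<close>
definition Q_coeffs :: "'a set \<Rightarrow> ('a set \<Rightarrow> nat) \<Rightarrow> nat \<times> nat \<Rightarrow> real" where
  "Q_coeffs E r = (SOME c. finite {p. c p \<noteq> 0} \<and>
     (\<forall>t u. real (Q_count E r t u) =
        (\<Sum>p\<in>{p. c p \<noteq> 0}. c p * real (u choose snd p) * real (t choose fst p))))"

definition Q' :: "'a set \<Rightarrow> ('a set \<Rightarrow> nat) \<Rightarrow> real \<Rightarrow> real \<Rightarrow> real" where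
  "Q' E r x y = (let c = Q_coeffs E r in
     (\<Sum>p\<in>{p. c p \<noteq> 0}. c p * (x - 1) ^ fst p * (y - 1) ^ snd p))"

end

theory Submission
  imports Defs
begin

lemma mr_finite: "matroid_rank E r \<Longrightarrow> finite E"
  by (simp add: matroid_rank_def)
lemma mr_card: "matroid_rank E r \<Longrightarrow> X \<subseteq> E \<Longrightarrow> r X \<le> card X"
  by (simp add: matroid_rank_def)
lemma mr_mono: "matroid_rank E r \<Longrightarrow> X \<subseteq> Y \<Longrightarrow> Y \<subseteq> E \<Longrightarrow> r X \<le> r Y"
  by (simp add: matroid_rank_def)
lemma mr_submod: "matroid_rank E r \<Longrightarrow> X \<subseteq> E \<Longrightarrow> Y \<subseteq> E \<Longrightarrow> r (X \<union> Y) + r (X \<inter> Y) \<le> r X + r Y"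
  by (simp add: matroid_rank_def)
lemma mr_empty: "matroid_rank E r \<Longrightarrow> r {} = 0"
  using mr_card[of E r "{}"] by simp

lemma mr_single: "matroid_rank E r \<Longrightarrow> a \<in> E \<Longrightarrow> r {a} \<le> 1"
  using mr_card[of E r "{a}"] by simp

lemma mr_insert_le: assumes "matroid_rank E r" "X \<subseteq> E" "a \<in> E"
  shows "r (insert a X) \<le> r X + 1"
proof -
  have "r (X \<union> {a}) + r (X \<inter> {a}) \<le> r X + r {a}" using mr_submod[OF assms(1,2), of "{a}"] assms(3) by simp
  then show ?thesis using mr_single[OF assms(1,3)] by simp
qed

lemma mr_indep_subset: assumes M: "matroid_rank E r" and "I \<subseteq> J" "J \<subseteq> E" "r J = card J"
  shows "r I = card I"
proof -
  have fJ: "finite J" using mr_finite[OF M] assms(3) finite_subset by blast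
  have "r (I \<union> (J - I)) + r (I \<inter> (J - I)) \<le> r I + r (J - I)"
    using mr_submod[OF M, of I "J - I"] assms by blast
  moreover have "I \<union> (J - I) = J" using assms by blast
  moreover have "I \<inter> (J - I) = {}" by blast
  moreover have "r (J - I) \<le> card (J - I)" using mr_card[OF M, of "J - I"] assms by blast
  moreover have "card J = card I + card (J - I)"
    using card_Diff_subset[of I J] assms fJ finite_subset[of I J] card_mono[of J I] by auto
  moreover have "r I \<le> card I" using mr_card[OF M, of I] assms by blast
  ultimately show ?thesis using assms(4) by (simp add: mr_empty[OF M])
qed

lemma mr_extend: assumes M: "matroid_rank E r" and IX: "I \<subseteq> X" "X \<subseteq> E" "r I = card I"
  shows "\<exists>J. I \<subseteq> J \<and> J \<subseteq> X \<and> r J = card J \<and> r J = r X"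
proof -
  have fX: "finite X" using mr_finite[OF M] IX finite_subset by blast
  define F where "F = {J. I \<subseteq> J \<and> J \<subseteq> X \<and> r J = card J}"
  have "I \<in> F" using IX by (simp add: F_def)
  then obtain J where J: "J \<in> F" and Jmax: "\<forall>J'. J' \<in> F \<longrightarrow> card X - card J \<le> card X - card J'"
    using ex_has_least_nat[of "\<lambda>J. J \<in> F" I "\<lambda>J. card X - card J"] by blast
  have JX: "J \<subseteq> X" and IJ: "I \<subseteq> J" and rJ: "r J = card J" using J by (auto simp: F_def)
  have fJ: "finite J" using fX JX finite_subset by blast
  have cJ: "card J \<le> card X" using card_mono[OF fX JX] .
  have step: "r (insert x J) = r J" if x: "x \<in> X - J" for x
  proof -
    have le: "r (insert x J) \<le> r J + 1" using mr_insert_le[OF M, of J x] JX IX x by blast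
    have ge: "r J \<le> r (insert x J)" using mr_mono[OF M, of J "insert x J"] JX IX x by blast
    show ?thesis
    proof (rule ccontr)
      assume "r (insert x J) \<noteq> r J"
      then have "r (insert x J) = card (insert x J)" using le ge rJ x fJ by simp
      then have "insert x J \<in> F" using J x by (auto simp: F_def)
      then have "card X - card J \<le> card X - card (insert x J)" using Jmax by blast
      moreover have "card (insert x J) \<le> card X" using card_mono[OF fX] JX x by blast
      ultimately show False using x fJ cJ by simp
    qed
  qed
  have gen: "A \<subseteq> X - J \<Longrightarrow> r (J \<union> A) = r J" if fA: "finite A" for A
    using fA
  proof (induction A rule: finite_induct)
    case empty then show ?case by simp
  next
    case (insert x A)
    have IH: "r (J \<union> A) = r J" using insert by blast
    have sub: "r ((J \<union> A) \<union> insert x J) + r ((J \<union> A) \<inter> insert x J) \<le> r (J \<union> A) + r (insert x J)"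
      using mr_submod[OF M, of "J \<union> A" "insert x J"] insert.prems JX IX by blast
    have e1: "(J \<union> A) \<union> insert x J = J \<union> insert x A" by blast
    have e2: "(J \<union> A) \<inter> insert x J = J" using insert by blast
    have "r (J \<union> insert x A) \<le> r J" using sub e1 e2 IH step[of x] insert by simp
    moreover have "r J \<le> r (J \<union> insert x A)" using mr_mono[OF M, of J "J \<union> insert x A"] insert.prems JX IX by blast
    ultimately show ?case by simp
  qed
  have "r (J \<union> (X - J)) = r J" using gen[of "X - J"] fX by blast
  moreover have "J \<union> (X - J) = X" using JX by blast
  ultimately show ?thesis using IJ JX rJ by auto
qed

lemma mr_restrict: "matroid_rank E r \<Longrightarrow> E' \<subseteq> E \<Longrightarrow> matroid_rank E' r"
  unfolding matroid_rank_def by (meson finite_subset order_trans)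

lemma mr_contract: assumes M: "matroid_rank E r" and e: "e \<in> E"
  shows "matroid_rank (E - {e}) (contract_rank r e)"
proof -
  have ge: "r {e} \<le> r (X \<union> {e})" if "X \<subseteq> E" for X using mr_mono[OF M, of "{e}" "X \<union> {e}"] that e by blast
  have A: "contract_rank r e X \<le> card X" if X: "X \<subseteq> E - {e}" for X
  proof -
    have "r (X \<union> {e}) + r (X \<inter> {e}) \<le> r X + r {e}" using mr_submod[OF M, of X "{e}"] X e by blast
    moreover have "X \<inter> {e} = {}" using X by blast
    moreover have "r X \<le> card X" using mr_card[OF M, of X] X by blast
    ultimately show ?thesis by (simp add: contract_rank_def mr_empty[OF M])
  qed
  have B: "contract_rank r e X \<le> contract_rank r e Y" if "X \<subseteq> Y" "Y \<subseteq> E - {e}" for X Y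
  proof -
    have "r (X \<union> {e}) \<le> r (Y \<union> {e})" using mr_mono[OF M, of "X \<union> {e}" "Y \<union> {e}"] that e by blast
    then show ?thesis by (simp add: contract_rank_def)
  qed
  have C: "contract_rank r e (X \<union> Y) + contract_rank r e (X \<inter> Y) \<le> contract_rank r e X + contract_rank r e Y"
    if "X \<subseteq> E - {e}" "Y \<subseteq> E - {e}" for X Y
  proof -
    have s: "r ((X \<union> {e}) \<union> (Y \<union> {e})) + r ((X \<union> {e}) \<inter> (Y \<union> {e})) \<le> r (X \<union> {e}) + r (Y \<union> {e})"
      using mr_submod[OF M, of "X \<union> {e}" "Y \<union> {e}"] that e by blast
    have e1: "(X \<union> {e}) \<union> (Y \<union> {e}) = X \<union> Y \<union> {e}" by blast
    have e2: "(X \<union> {e}) \<inter> (Y \<union> {e}) = X \<inter> Y \<union> {e}" by blast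
    have g1: "r {e} \<le> r (X \<union> Y \<union> {e})" using ge[of "X \<union> Y"] that by blast
    have g2: "r {e} \<le> r (X \<inter> Y \<union> {e})" using ge[of "X \<inter> Y"] that by blast
    show ?thesis using s e1 e2 g1 g2 by (simp add: contract_rank_def)
  qed
  show ?thesis using A B C mr_finite[OF M] unfolding matroid_rank_def by auto
qed

lemma nlc_facts: assumes M: "matroid_rank E r" and e: "e \<in> E"
  and "\<not> is_loop E r e" "\<not> is_coloop E r e"
  shows "r {e} = 1" "r (E - {e}) = r E"
proof -
  show "r {e} = 1" using assms mr_single[OF M e] by (simp add: is_loop_def)
  have "r (E - {e}) \<le> r E" using mr_mono[OF M, of "E - {e}" E] by blast
  then show "r (E - {e}) = r E" using assms by (simp add: is_coloop_def)
qed

lemma loop_ins: assumes M: "matroid_rank E r" and "is_loop E r e" "Y \<subseteq> E"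
  shows "r (insert e Y) = r Y"
proof -
  have e: "e \<in> E" "r {e} = 0" using assms by (auto simp: is_loop_def)
  have "r (Y \<union> {e}) + r (Y \<inter> {e}) \<le> r Y + r {e}" using mr_submod[OF M, of Y "{e}"] assms e by blast
  moreover have "r Y \<le> r (insert e Y)" using mr_mono[OF M, of Y "insert e Y"] assms e by blast
  ultimately show ?thesis using e by simp
qed

lemma coloop_ins: assumes M: "matroid_rank E r" and "is_coloop E r e" "Y \<subseteq> E - {e}"
  shows "r (insert e Y) = r Y + 1"
proof -
  have e: "e \<in> E" "r (E - {e}) < r E" using assms by (auto simp: is_coloop_def)
  have "r ((E - {e}) \<union> insert e Y) + r ((E - {e}) \<inter> insert e Y) \<le> r (E - {e}) + r (insert e Y)"
    using mr_submod[OF M, of "E - {e}" "insert e Y"] assms e by blast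
  moreover have "(E - {e}) \<union> insert e Y = E" using e assms(3) by blast
  moreover have "(E - {e}) \<inter> insert e Y = Y" using assms by blast
  moreover have "r (insert e Y) \<le> r Y + 1" using mr_insert_le[OF M, of Y e] assms e by blast
  ultimately show ?thesis using e by simp
qed

definition Lset :: "'a set \<Rightarrow> ('a set \<Rightarrow> nat) \<Rightarrow> nat \<Rightarrow> nat \<Rightarrow> ('a \<Rightarrow> int) set" where
  "Lset E r t u = {z. (\<forall>a. a \<notin> E \<longrightarrow> z a = 0) \<and> (\<Sum>a\<in>E. z a) = int (r E) + int u - int t \<and>
     (\<forall>X. X \<subseteq> E \<longrightarrow> (\<Sum>a\<in>X. z a) \<le> int (r X) + int u)}"

lemma Lset_finite: assumes M: "matroid_rank E r" shows "finite (Lset E r t u)"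
proof -
  have fE: "finite E" using mr_finite[OF M] .
  have "Lset E r t u \<subseteq> {f. \<forall>x. (x \<in> E \<longrightarrow> f x \<in> {- int t .. 1 + int u}) \<and> (x \<notin> E \<longrightarrow> f x = 0)}"
  proof
    fix z assume z: "z \<in> Lset E r t u"
    have "z x \<in> {- int t .. 1 + int u}" if x: "x \<in> E" for x
    proof -
      have "(\<Sum>a\<in>{x}. z a) \<le> int (r {x}) + int u" using z x unfolding Lset_def by blast
      then have up: "z x \<le> 1 + int u" using mr_single[OF M x] by simp
      have s1: "(\<Sum>a\<in>E - {x}. z a) \<le> int (r (E - {x})) + int u" using z by (simp add: Lset_def)
      have s2: "(\<Sum>a\<in>E. z a) = z x + (\<Sum>a\<in>E - {x}. z a)" using sum.remove[OF fE x] .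
      have s3: "(\<Sum>a\<in>E. z a) = int (r E) + int u - int t" using z by (simp add: Lset_def)
      have "r (E - {x}) \<le> r E" using mr_mono[OF M, of "E - {x}" E] by blast
      then have "z x \<ge> - int t" using s1 s2 s3 by linarith
      then show ?thesis using up by simp
    qed
    then show "z \<in> {f. \<forall>x. (x \<in> E \<longrightarrow> f x \<in> {- int t .. 1 + int u}) \<and> (x \<notin> E \<longrightarrow> f x = 0)}"
      using z by (auto simp: Lset_def)
  qed
  moreover have "finite {f. \<forall>x. (x \<in> E \<longrightarrow> f x \<in> {- int t .. 1 + int u}) \<and> (x \<notin> E \<longrightarrow> f x = (0::int))}"
    by (rule finite_set_of_finite_funs) (use fE in auto)
  ultimately show ?thesis using finite_subset by blast
qed

lemma fiber: assumes M: "matroid_rank E r" and e: "e \<in> E" and z0: "z e = 0"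
  shows "z(e := k) \<in> Lset E r t u \<longleftrightarrow> (\<forall>a. a \<notin> E - {e} \<longrightarrow> z a = 0) \<and>
     (\<Sum>a\<in>E - {e}. z a) + k = int (r E) + int u - int t \<and>
     (\<forall>Y. Y \<subseteq> E - {e} \<longrightarrow> (\<Sum>a\<in>Y. z a) \<le> int (r Y) + int u \<and>
                             (\<Sum>a\<in>Y. z a) + k \<le> int (r (insert e Y)) + int u)"
proof -
  have fE: "finite E" using mr_finite[OF M] .
  have sY: "(\<Sum>a\<in>Y. (z(e := k)) a) = (\<Sum>a\<in>Y. z a)" if "Y \<subseteq> E - {e}" for Y
    by (rule sum.cong) (use that in auto)
  have sI: "(\<Sum>a\<in>insert e Y. (z(e := k)) a) = (\<Sum>a\<in>Y. z a) + k" if Y: "Y \<subseteq> E - {e}" for Y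
  proof -
    have "finite Y" using Y fE finite_subset by blast
    moreover have "e \<notin> Y" using Y by blast
    ultimately show ?thesis using sY[OF Y] by (simp add: sum.insert)
  qed
  have EE: "E = insert e (E - {e})" using e by blast
  have sE: "(\<Sum>a\<in>E. (z(e := k)) a) = (\<Sum>a\<in>E - {e}. z a) + k"
    using sI[of "E - {e}"] EE by simp
  have supp: "(\<forall>a. a \<notin> E \<longrightarrow> (z(e := k)) a = 0) \<longleftrightarrow> (\<forall>a. a \<notin> E - {e} \<longrightarrow> z a = 0)"
    using e z0 by auto
  have cons: "(\<forall>X. X \<subseteq> E \<longrightarrow> (\<Sum>a\<in>X. (z(e := k)) a) \<le> int (r X) + int u) \<longleftrightarrow>
     (\<forall>Y. Y \<subseteq> E - {e} \<longrightarrow> (\<Sum>a\<in>Y. z a) \<le> int (r Y) + int u \<and>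
                             (\<Sum>a\<in>Y. z a) + k \<le> int (r (insert e Y)) + int u)"
  proof
    assume H: "\<forall>X. X \<subseteq> E \<longrightarrow> (\<Sum>a\<in>X. (z(e := k)) a) \<le> int (r X) + int u"
    show "\<forall>Y. Y \<subseteq> E - {e} \<longrightarrow> (\<Sum>a\<in>Y. z a) \<le> int (r Y) + int u \<and>
                             (\<Sum>a\<in>Y. z a) + k \<le> int (r (insert e Y)) + int u"
    proof (intro allI impI conjI)
      fix Y assume Y: "Y \<subseteq> E - {e}"
      show "(\<Sum>a\<in>Y. z a) \<le> int (r Y) + int u" using H[rule_format, of Y] Y sY[OF Y] by auto
      show "(\<Sum>a\<in>Y. z a) + k \<le> int (r (insert e Y)) + int u"
        using H[rule_format, of "insert e Y"] Y sI[OF Y] e by auto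
    qed
  next
    assume H: "\<forall>Y. Y \<subseteq> E - {e} \<longrightarrow> (\<Sum>a\<in>Y. z a) \<le> int (r Y) + int u \<and>
                             (\<Sum>a\<in>Y. z a) + k \<le> int (r (insert e Y)) + int u"
    show "\<forall>X. X \<subseteq> E \<longrightarrow> (\<Sum>a\<in>X. (z(e := k)) a) \<le> int (r X) + int u"
    proof (intro allI impI)
      fix X assume X: "X \<subseteq> E"
      show "(\<Sum>a\<in>X. (z(e := k)) a) \<le> int (r X) + int u"
      proof (cases "e \<in> X")
        case True
        have Y: "X - {e} \<subseteq> E - {e}" using X by blast
        have "X = insert e (X - {e})" using True by blast
        then show ?thesis using H[rule_format, OF Y] sI[OF Y] by metis
      next
        case False
        have Y: "X \<subseteq> E - {e}" using X False by blast
        then show ?thesis using H[rule_format, OF Y] sY[OF Y] by simp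
      qed
    qed
  qed
  show ?thesis unfolding Lset_def mem_Collect_eq using supp cons sE by simp
qed

lemma conv_le: assumes "p \<in> conv_hull_fun S" "\<And>v. v \<in> S \<Longrightarrow> (\<Sum>a\<in>X. v a) \<le> c"
  shows "(\<Sum>a\<in>X. p a) \<le> c"
proof -
  obtain T w where T: "finite T" "T \<noteq> {}" "T \<subseteq> S" "\<forall>v\<in>T. 0 \<le> w v" "sum w T = 1"
    and p: "p = (\<lambda>a. \<Sum>v\<in>T. w v * v a)" using assms(1) unfolding conv_hull_fun_def by blast
  have "(\<Sum>a\<in>X. p a) = (\<Sum>v\<in>T. w v * (\<Sum>a\<in>X. v a))"
    unfolding p by (simp add: sum.swap[of _ X] sum_distrib_left)
  also have "\<dots> \<le> (\<Sum>v\<in>T. w v * c)"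
    by (rule sum_mono) (use T assms(2) in \<open>auto intro: mult_left_mono\<close>)
  also have "\<dots> = c" using T by (simp add: sum_distrib_right[symmetric])
  finally show ?thesis .
qed

lemma conv_ge: assumes "p \<in> conv_hull_fun S" "\<And>v. v \<in> S \<Longrightarrow> c \<le> (\<Sum>a\<in>X. v a)"
  shows "c \<le> (\<Sum>a\<in>X. p a)"
proof -
  obtain T w where T: "finite T" "T \<noteq> {}" "T \<subseteq> S" "\<forall>v\<in>T. 0 \<le> w v" "sum w T = 1"
    and p: "p = (\<lambda>a. \<Sum>v\<in>T. w v * v a)" using assms(1) unfolding conv_hull_fun_def by blast
  have "c = (\<Sum>v\<in>T. w v * c)" using T by (simp add: sum_distrib_right[symmetric])
  also have "\<dots> \<le> (\<Sum>v\<in>T. w v * (\<Sum>a\<in>X. v a))"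
    by (rule sum_mono) (use T assms(2) in \<open>auto intro: mult_left_mono\<close>)
  also have "\<dots> = (\<Sum>a\<in>X. p a)"
    unfolding p by (simp add: sum.swap[of _ X] sum_distrib_left)
  finally show ?thesis .
qed

lemma sum_indic: "finite X \<Longrightarrow> (\<Sum>a\<in>X. indic B a) = real (card (X \<inter> B))"
  by (simp add: indic_def sum.inter_restrict[symmetric])

lemma scale_sum: "p \<in> scale_set c S \<Longrightarrow> \<exists>v\<in>S. p = (\<lambda>a. c * v a)"
  unfolding scale_set_def by blast

lemma base_bounds: assumes M: "matroid_rank E r" and X: "X \<subseteq> E" and p: "p \<in> base_polytope E r"
  shows "(\<Sum>a\<in>X. p a) \<le> real (r X)" "(\<Sum>a\<in>E. p a) = real (r E)"
proof -
  have fE: "finite E" using mr_finite[OF M] .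
  have fX: "finite X" using fE X finite_subset by blast
  have bnd: "(\<Sum>a\<in>Y. v a) \<le> real (r Y)" if v: "v \<in> indic ` bases E r" and Y: "Y \<subseteq> E" for v Y
  proof -
    obtain B where B: "B \<in> bases E r" "v = indic B" using v by blast
    have BE: "B \<subseteq> E" "r B = card B" using B by (auto simp: bases_def)
    have fY: "finite Y" using fE Y finite_subset by blast
    have "r (Y \<inter> B) = card (Y \<inter> B)" using mr_indep_subset[OF M, of "Y \<inter> B" B] BE by blast
    moreover have "r (Y \<inter> B) \<le> r Y" using mr_mono[OF M, of "Y \<inter> B" Y] Y by blast
    ultimately show ?thesis using B sum_indic[OF fY] by simp
  qed
  have eq: "(\<Sum>a\<in>E. v a) = real (r E)" if v: "v \<in> indic ` bases E r" for v
  proof -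
    obtain B where B: "B \<in> bases E r" "v = indic B" using v by blast
    have "B \<subseteq> E" "card B = r E" using B by (auto simp: bases_def)
    then have "E \<inter> B = B" by blast
    then show ?thesis using B sum_indic[OF fE] \<open>card B = r E\<close> by simp
  qed
  show "(\<Sum>a\<in>X. p a) \<le> real (r X)"
    using conv_le[of p "indic ` bases E r" X] p bnd X unfolding base_polytope_def by blast
  have "(\<Sum>a\<in>E. p a) \<le> real (r E)"
    using conv_le[of p "indic ` bases E r" E] p bnd unfolding base_polytope_def by blast
  moreover have "real (r E) \<le> (\<Sum>a\<in>E. p a)"
    using conv_ge[of p "indic ` bases E r" "real (r E)" E] p eq unfolding base_polytope_def by simp
  ultimately show "(\<Sum>a\<in>E. p a) = real (r E)" by simp
qed

lemma delta_bounds: assumes fE: "finite E" and X: "X \<subseteq> E" and p: "p \<in> simplex_Delta E"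
  shows "(\<Sum>a\<in>X. p a) \<le> 1" "0 \<le> (\<Sum>a\<in>X. p a)" "(\<Sum>a\<in>E. p a) = 1"
proof -
  have fX: "finite X" using fE X finite_subset by blast
  have c: "card (Y \<inter> {i}) \<le> 1" for Y i
    using card_mono[of "{i}" "Y \<inter> {i}"] by simp
  have b1: "(\<Sum>a\<in>Y. v a) \<le> 1" if vv: "v \<in> (\<lambda>i. indic {i}) ` E" and fY: "finite Y" for v Y
  proof -
    obtain i where i: "v = indic {i}" using vv by blast
    have "(\<Sum>a\<in>Y. v a) = real (card (Y \<inter> {i}))" using sum_indic[OF fY] i by simp
    moreover have "card (Y \<inter> {i}) \<le> 1" by (rule c)
    then have "real (card (Y \<inter> {i})) \<le> 1" by (metis of_nat_1 of_nat_le_iff)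
    ultimately show ?thesis by linarith
  qed
  have b2: "0 \<le> (\<Sum>a\<in>Y. v a)" if "v \<in> (\<lambda>i. indic {i}) ` E" "finite Y" for v Y
    using that by (auto intro!: sum_nonneg simp: indic_def)
  have b3: "1 \<le> (\<Sum>a\<in>E. v a)" if vv: "v \<in> (\<lambda>i. indic {i}) ` E" for v
  proof -
    obtain i where "i \<in> E" "v = indic {i}" using vv by blast
    then show ?thesis using sum_indic[OF fE, of "{i}"] by simp
  qed
  show "(\<Sum>a\<in>X. p a) \<le> 1" using conv_le[OF p[unfolded simplex_Delta_def]] b1 fX by blast
  show "0 \<le> (\<Sum>a\<in>X. p a)" using conv_ge[OF p[unfolded simplex_Delta_def]] b2 fX by blast
  have "(\<Sum>a\<in>E. p a) \<le> 1" using conv_le[OF p[unfolded simplex_Delta_def]] b1 fE by blast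
  moreover have "1 \<le> (\<Sum>a\<in>E. p a)" using conv_ge[OF p[unfolded simplex_Delta_def]] b3 by blast
  ultimately show "(\<Sum>a\<in>E. p a) = 1" by simp
qed

definition PS :: "'a set \<Rightarrow> ('a set \<Rightarrow> nat) \<Rightarrow> nat \<Rightarrow> nat \<Rightarrow> ('a \<Rightarrow> real) set" where
  "PS E r t u = mink_sum (mink_sum (base_polytope E r) (scale_set (real u) (simplex_Delta E)))
                (scale_set (real t) (simplex_nabla E))"

lemma PS_to_L: assumes M: "matroid_rank E r" and z0: "\<forall>a. a \<notin> E \<longrightarrow> z a = 0"
  and zP: "(\<lambda>a. real_of_int (z a)) \<in> PS E r t u"
  shows "z \<in> Lset E r t u"
proof -
  have fE: "finite E" using mr_finite[OF M] .
  obtain x y w where x: "x \<in> base_polytope E r" and y: "y \<in> scale_set (real u) (simplex_Delta E)"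
    and w: "w \<in> scale_set (real t) (simplex_nabla E)"
    and zf: "(\<lambda>a. real_of_int (z a)) = (\<lambda>a. x a + y a + w a)"
    using zP unfolding PS_def mink_sum_def by auto
  obtain vy where vy: "vy \<in> simplex_Delta E" "y = (\<lambda>a. real u * vy a)" using scale_sum[OF y] by blast
  obtain w1 where w1: "w1 \<in> simplex_nabla E" "w = (\<lambda>a. real t * w1 a)" using scale_sum[OF w] by blast
  obtain vw where vw: "vw \<in> simplex_Delta E" "w1 = (\<lambda>a. -1 * vw a)"
    using scale_sum[OF w1(1)[unfolded simplex_nabla_def]] by blast
  have sz: "real_of_int (\<Sum>a\<in>X. z a) = (\<Sum>a\<in>X. x a) + real u * (\<Sum>a\<in>X. vy a) - real t * (\<Sum>a\<in>X. vw a)" for X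
  proof -
    have "real_of_int (\<Sum>a\<in>X. z a) = (\<Sum>a\<in>X. real_of_int (z a))" by simp
    also have "\<dots> = (\<Sum>a\<in>X. x a + y a + w a)" by (simp add: zf fun_eq_iff[symmetric] zf[unfolded fun_eq_iff])
    also have "\<dots> = (\<Sum>a\<in>X. x a) + real u * (\<Sum>a\<in>X. vy a) - real t * (\<Sum>a\<in>X. vw a)"
      by (simp add: vy w1 vw sum.distrib sum_distrib_left sum_subtractf)
    finally show ?thesis .
  qed
  have eqE: "(\<Sum>a\<in>E. z a) = int (r E) + int u - int t"
  proof -
    have "real_of_int (\<Sum>a\<in>E. z a) = real (r E) + real u - real t"
      using sz[of E] base_bounds(2)[OF M order_refl x] delta_bounds(3)[OF fE order_refl vy(1)] delta_bounds(3)[OF fE order_refl vw(1)]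
      by simp
    then show ?thesis by linarith
  qed
  have le: "(\<Sum>a\<in>X. z a) \<le> int (r X) + int u" if X: "X \<subseteq> E" for X
  proof -
    have a: "(\<Sum>a\<in>X. x a) \<le> real (r X)" using base_bounds(1)[OF M X x] .
    have b: "real u * (\<Sum>a\<in>X. vy a) \<le> real u" using delta_bounds(1)[OF fE X vy(1)]
      by (simp add: mult_left_le)
    have c: "0 \<le> real t * (\<Sum>a\<in>X. vw a)" using delta_bounds(2)[OF fE X vw(1)] by simp
    have "real_of_int (\<Sum>a\<in>X. z a) \<le> real (r X) + real u" using sz[of X] a b c by linarith
    then show ?thesis by linarith
  qed
  show ?thesis unfolding Lset_def using z0 eqE le by blast
qed

lemma simplex_scale: assumes fE: "finite E" and ne: "E \<noteq> {}" and nn: "\<forall>i. 0 \<le> a i"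
  and off: "\<forall>i. i \<notin> E \<longrightarrow> a i = 0" and s: "(\<Sum>i\<in>E. a i) = int n"
  shows "\<exists>v\<in>simplex_Delta E. \<forall>i. real_of_int (a i) = real n * v i"
proof (cases "n = 0")
  case True
  obtain i0 where i0: "i0 \<in> E" using ne by blast
  have "\<forall>i\<in>E. a i = 0" using sum_nonneg_eq_0_iff[OF fE, of a] nn s True by simp
  then have a0: "\<forall>i. a i = 0" using off by blast
  have "indic {i0} \<in> simplex_Delta E"
    unfolding simplex_Delta_def conv_hull_fun_def
    by (rule CollectI, rule exI[of _ "{indic {i0}}"], rule exI[of _ "\<lambda>_. 1"]) (use i0 in auto)
  then show ?thesis using a0 True by auto
next
  case False
  define h where "h = (\<lambda>i::'a. indic {i})"
  have inj: "inj_on h E" unfolding inj_on_def h_def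
  proof (intro ballI impI)
    fix x y assume "indic {x} = indic {y}"
    then have "indic {x} x = indic {y} x" by simp
    then show "x = y" by (simp add: indic_def split: if_splits)
  qed
  define w where "w = (\<lambda>x. real_of_int (a (inv_into E h x)) / real n)"
  have wh: "w (h i) = real_of_int (a i) / real n" if "i \<in> E" for i
    using inv_into_f_f[OF inj that] by (simp add: w_def)
  define v where "v = (\<lambda>j. \<Sum>x\<in>h ` E. w x * x j)"
  have vj: "real n * v j = real_of_int (a j)" for j
  proof -
    have "v j = (\<Sum>i\<in>E. w (h i) * h i j)" unfolding v_def using sum.reindex[OF inj] by simp
    also have "\<dots> = (\<Sum>i\<in>E. (if i = j then real_of_int (a i) / real n else 0))"
      by (rule sum.cong, simp, subst wh, assumption, simp add: h_def indic_def)
    also have "\<dots> = (if j \<in> E then real_of_int (a j) / real n else 0)"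
      using fE by simp
    finally show ?thesis using False off by auto
  qed
  have sw: "sum w (h ` E) = 1"
  proof -
    have "sum w (h ` E) = (\<Sum>i\<in>E. real_of_int (a i) / real n)"
      using sum.reindex[OF inj, of w] wh by simp
    also have "\<dots> = real_of_int (\<Sum>i\<in>E. a i) / real n" by (simp add: sum_divide_distrib)
    finally show ?thesis using s False by simp
  qed
  have "v \<in> simplex_Delta E"
    unfolding simplex_Delta_def conv_hull_fun_def
    apply (rule CollectI, rule exI[of _ "h ` E"], rule exI[of _ w])
    using fE ne sw nn by (auto simp: h_def v_def w_def)
  then show ?thesis using vj by metis
qed

lemma L_to_PS: assumes M: "matroid_rank E r" and ne: "E \<noteq> {}" and z: "z \<in> Lset E r t u"
  shows "(\<lambda>a. real_of_int (z a)) \<in> PS E r t u"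
proof -
  have fE: "finite E" using mr_finite[OF M] .
  obtain i0 where i0: "i0 \<in> E" using ne by blast
  have zoff: "\<forall>a. a \<notin> E \<longrightarrow> z a = 0" and zs: "(\<Sum>a\<in>E. z a) = int (r E) + int u - int t"
    and zle: "\<And>X. X \<subseteq> E \<Longrightarrow> (\<Sum>a\<in>X. z a) \<le> int (r X) + int u" using z by (auto simp: Lset_def)
  define P where "P = {i\<in>E. z i > 0}"
  have PE: "P \<subseteq> E" by (auto simp: P_def)
  have fP: "finite P" using fE PE finite_subset by blast
  obtain J1 where J1: "J1 \<subseteq> P" "r J1 = card J1" "r J1 = r P"
    using mr_extend[OF M, of "{}" P] PE mr_empty[OF M] by auto
  obtain B where B: "J1 \<subseteq> B" "B \<subseteq> E" "r B = card B" "r B = r E"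
  proof -
    have "J1 \<subseteq> E" using J1 PE by blast
    then show ?thesis using mr_extend[OF M, of J1 E] J1 that by auto
  qed
  have Bb: "B \<in> bases E r" using B by (simp add: bases_def)
  have fB: "finite B" using fE B finite_subset by blast
  have cJ: "card J1 \<le> card (P \<inter> B)" using card_mono[of "P \<inter> B" J1] fP J1 B by blast
  define wv where "wv = (\<lambda>i. z i - (if i \<in> B then 1 else 0))"
  define pos where "pos = (\<lambda>i. max (wv i) 0)"
  define neg where "neg = (\<lambda>i. max (- wv i) 0)"
  have posP: "pos i = (if i \<in> P then z i - (if i \<in> B then 1 else 0) else 0)" if "i \<in> E" for i
    using that by (auto simp: pos_def wv_def P_def)
  have sumpos: "(\<Sum>i\<in>E. pos i) = (\<Sum>i\<in>P. z i) - int (card (P \<inter> B))"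
  proof -
    have "(\<Sum>i\<in>E. pos i) = (\<Sum>i\<in>E. if i \<in> P then z i - (if i \<in> B then 1 else 0) else 0)"
      by (rule sum.cong) (use posP in auto)
    also have "\<dots> = (\<Sum>i\<in>P. z i - (if i \<in> B then 1 else 0))"
      using sum.inter_restrict[OF fE, of "\<lambda>i. z i - (if i \<in> B then 1 else 0)" P] PE
      by (simp add: Int_absorb1)
    also have "\<dots> = (\<Sum>i\<in>P. z i) - (\<Sum>i\<in>P. if i \<in> B then 1 else 0)" by (simp add: sum_subtractf)
    also have "(\<Sum>i\<in>P. if i \<in> B then (1::int) else 0) = int (card (P \<inter> B))"
      using sum.inter_restrict[OF fP, of "\<lambda>_. (1::int)" B] by simp
    finally show ?thesis .
  qed
  have posle: "(\<Sum>i\<in>E. pos i) \<le> int u" using sumpos zle[OF PE] J1 cJ by linarith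
  have sumw: "(\<Sum>i\<in>E. wv i) = int u - int t"
  proof -
    have "(\<Sum>i\<in>E. wv i) = (\<Sum>i\<in>E. z i) - (\<Sum>i\<in>E. if i \<in> B then 1 else 0)"
      by (simp add: wv_def sum_subtractf)
    also have "(\<Sum>i\<in>E. if i \<in> B then (1::int) else 0) = int (card B)"
      using sum.inter_restrict[OF fE, of "\<lambda>_. (1::int)" B] B by (simp add: Int_absorb1)
    finally show ?thesis using zs B by simp
  qed
  have wpn: "wv i = pos i - neg i" for i by (simp add: pos_def neg_def)
  have sumneg: "(\<Sum>i\<in>E. neg i) = (\<Sum>i\<in>E. pos i) - int u + int t"
    using sumw by (simp add: wpn sum_subtractf)
  define c where "c = int u - (\<Sum>i\<in>E. pos i)"
  have c0: "0 \<le> c" using posle by (simp add: c_def)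
  define aa where "aa = (\<lambda>i. pos i + (if i = i0 then c else 0))"
  define bb where "bb = (\<lambda>i. neg i + (if i = i0 then c else 0))"
  have woff: "wv i = 0" if "i \<notin> E" for i using that zoff B by (auto simp: wv_def)
  have aa_nn: "\<forall>i. 0 \<le> aa i" using c0 by (simp add: aa_def pos_def)
  have bb_nn: "\<forall>i. 0 \<le> bb i" using c0 by (simp add: bb_def neg_def)
  have aa_off: "\<forall>i. i \<notin> E \<longrightarrow> aa i = 0" using woff i0 by (auto simp: aa_def pos_def)
  have bb_off: "\<forall>i. i \<notin> E \<longrightarrow> bb i = 0" using woff i0 by (auto simp: bb_def neg_def)
  have aa_s: "(\<Sum>i\<in>E. aa i) = int u" using i0 fE by (simp add: aa_def sum.distrib c_def)
  have bb_s: "(\<Sum>i\<in>E. bb i) = int t" using i0 fE sumneg by (simp add: bb_def sum.distrib c_def)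
  have zdec: "z i = (if i \<in> B then 1 else 0) + aa i - bb i" for i
    using wpn[of i] by (simp add: aa_def bb_def wv_def)
  obtain va where va: "va \<in> simplex_Delta E" "\<forall>i. real_of_int (aa i) = real u * va i"
    using simplex_scale[OF fE ne aa_nn aa_off aa_s] by blast
  obtain vb where vb: "vb \<in> simplex_Delta E" "\<forall>i. real_of_int (bb i) = real t * vb i"
    using simplex_scale[OF fE ne bb_nn bb_off bb_s] by blast
  have x1: "indic B \<in> base_polytope E r"
    unfolding base_polytope_def conv_hull_fun_def
    by (rule CollectI, rule exI[of _ "{indic B}"], rule exI[of _ "\<lambda>_. 1"]) (use Bb in auto)
  have y1: "(\<lambda>i. real u * va i) \<in> scale_set (real u) (simplex_Delta E)"
    unfolding scale_set_def using va(1) by blast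
  have w1: "(\<lambda>i. real t * (-1 * vb i)) \<in> scale_set (real t) (simplex_nabla E)"
    unfolding simplex_nabla_def scale_set_def
    by (rule image_eqI[of _ _ "\<lambda>a. - 1 * vb a"], simp, rule imageI, rule vb(1))
  have s1: "(\<lambda>i. indic B i + real u * va i) \<in> mink_sum (base_polytope E r) (scale_set (real u) (simplex_Delta E))"
    unfolding mink_sum_def
    by (rule CollectI, rule exI[of _ "indic B"], rule exI[of _ "\<lambda>i. real u * va i"]) (use x1 y1 in simp)
  have "(\<lambda>i. (indic B i + real u * va i) + real t * (-1 * vb i)) \<in> PS E r t u"
    unfolding PS_def mink_sum_def[of _ "scale_set (real t) (simplex_nabla E)"]
    by (rule CollectI, rule exI[of _ "\<lambda>i. indic B i + real u * va i"], rule exI[of _ "\<lambda>i. real t * (-1 * vb i)"]) (use s1 w1 in simp)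
  moreover have "(\<lambda>i. (indic B i + real u * va i) + real t * (-1 * vb i)) = (\<lambda>a. real_of_int (z a))"
  proof
    fix i
    have "real_of_int (z i) = real_of_int (if i \<in> B then 1 else 0) + real_of_int (aa i) - real_of_int (bb i)"
      using zdec[of i] by simp
    then show "(indic B i + real u * va i) + real t * (-1 * vb i) = real_of_int (z i)"
      using va(2) vb(2) by (simp add: indic_def)
  qed
  ultimately show ?thesis by simp
qed

lemma Q_count_L: assumes M: "matroid_rank E r" and ne: "E \<noteq> {}"
  shows "Q_count E r t u = card (Lset E r t u)"
proof -
  have "{z :: 'a \<Rightarrow> int. (\<forall>a. a \<notin> E \<longrightarrow> z a = 0) \<and>
     (\<lambda>a. real_of_int (z a)) \<in>
       mink_sum (mink_sum (base_polytope E r) (scale_set (real u) (simplex_Delta E)))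
                (scale_set (real t) (simplex_nabla E))} = Lset E r t u"
  proof (rule set_eqI, rule iffI)
    fix z assume "z \<in> {z :: 'a \<Rightarrow> int. (\<forall>a. a \<notin> E \<longrightarrow> z a = 0) \<and>
     (\<lambda>a. real_of_int (z a)) \<in>
       mink_sum (mink_sum (base_polytope E r) (scale_set (real u) (simplex_Delta E)))
                (scale_set (real t) (simplex_nabla E))}"
    then show "z \<in> Lset E r t u" using PS_to_L[OF M, of z t u] unfolding PS_def by blast
  next
    fix z assume z: "z \<in> Lset E r t u"
    have "\<forall>a. a \<notin> E \<longrightarrow> z a = 0" using z unfolding Lset_def by blast
    then show "z \<in> {z :: 'a \<Rightarrow> int. (\<forall>a. a \<notin> E \<longrightarrow> z a = 0) \<and>
     (\<lambda>a. real_of_int (z a)) \<in>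
       mink_sum (mink_sum (base_polytope E r) (scale_set (real u) (simplex_Delta E)))
                (scale_set (real t) (simplex_nabla E))}" using L_to_PS[OF M ne z] unfolding PS_def by blast
  qed
  then show ?thesis unfolding Q_count_def by simp
qed

lemma card_upd_image: assumes "\<forall>z\<in>Z. z e = 0"
  shows "card ((\<lambda>z. z(e := k)) ` Z) = card Z"
proof (rule card_image, rule inj_onI)
  fix x y assume xy: "x \<in> Z" "y \<in> Z" "x(e := k) = y(e := k)"
  show "x = y"
  proof
    fix a show "x a = y a"
    proof (cases "a = e")
      case True
      have "x e = 0" "y e = 0" using assms xy by auto
      then show ?thesis using True by simp
    next
      case False then show ?thesis using fun_cong[OF xy(3), of a] by simp
    qed
  qed
qed

lemma card_UN_upd: assumes "finite S" "inj_on f S" "\<forall>s\<in>S. finite (F s) \<and> (\<forall>z\<in>F s. z e = 0)"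
  shows "card (\<Union>s\<in>S. (\<lambda>z. z(e := f s)) ` F s) = (\<Sum>s\<in>S. card (F s))"
proof -
  have "card (\<Union>s\<in>S. (\<lambda>z. z(e := f s)) ` F s) = (\<Sum>s\<in>S. card ((\<lambda>z. z(e := f s)) ` F s))"
  proof (rule card_UN_disjoint)
    show "finite S" by fact
    show "\<forall>i\<in>S. finite ((\<lambda>z. z(e := f i)) ` F i)" using assms by blast
    show "\<forall>i\<in>S. \<forall>j\<in>S. i \<noteq> j \<longrightarrow> (\<lambda>z. z(e := f i)) ` F i \<inter> (\<lambda>z. z(e := f j)) ` F j = {}"
    proof (intro ballI impI)
      fix i j assume ij: "i \<in> S" "j \<in> S" "i \<noteq> j"
      then have "f i \<noteq> f j" using assms(2) by (meson inj_onD)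
      then show "(\<lambda>z. z(e := f i)) ` F i \<inter> (\<lambda>z. z(e := f j)) ` F j = {}"
        by (auto dest: fun_cong[of _ _ e])
    qed
  qed
  also have "\<dots> = (\<Sum>s\<in>S. card (F s))"
    by (rule sum.cong, simp, rule card_upd_image, use assms in blast)
  finally show ?thesis .
qed

lemma card_split: assumes A: "A = (\<Union>s\<in>S. (\<lambda>z. z(e := f s)) ` F s) \<union> (\<Union>v\<in>V. (\<lambda>z. z(e := g v)) ` G v)"
  and "finite S" "finite V" "inj_on f S" "inj_on g V" "\<forall>s\<in>S. \<forall>v\<in>V. f s \<noteq> g v"
  and "\<forall>s\<in>S. finite (F s) \<and> (\<forall>z\<in>F s. z e = 0)" "\<forall>v\<in>V. finite (G v) \<and> (\<forall>z\<in>G v. z e = 0)"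
  shows "card A = (\<Sum>s\<in>S. card (F s)) + (\<Sum>v\<in>V. card (G v))"
proof -
  have "card A = card (\<Union>s\<in>S. (\<lambda>z. z(e := f s)) ` F s) + card (\<Union>v\<in>V. (\<lambda>z. z(e := g v)) ` G v)"
    unfolding A
  proof (rule card_Un_disjoint)
    show "finite (\<Union>s\<in>S. (\<lambda>z. z(e := f s)) ` F s)" using assms by blast
    show "finite (\<Union>v\<in>V. (\<lambda>z. z(e := g v)) ` G v)" using assms by blast
    show "(\<Union>s\<in>S. (\<lambda>z. z(e := f s)) ` F s) \<inter> (\<Union>v\<in>V. (\<lambda>z. z(e := g v)) ` G v) = {}"
      using assms(6) by (auto dest: fun_cong[of _ _ e])
  qed
  then show ?thesis using card_UN_upd[of S f F e] card_UN_upd[of V g G e] assms by simp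
qed

lemma rec_nlc: assumes M: "matroid_rank E r" and e: "e \<in> E" and nl: "\<not> is_loop E r e" and nc: "\<not> is_coloop E r e"
  shows "Lset E r t u = (\<Union>s\<in>{..t}. (\<lambda>z. z(e := int s - int t)) ` Lset (E - {e}) r s u) \<union>
     (\<Union>v\<in>{..u}. (\<lambda>z. z(e := int u + 1 - int v)) ` Lset (E - {e}) (contract_rank r e) t v)"
proof -
  have re: "r {e} = 1" and rE: "r (E - {e}) = r E" using nlc_facts[OF M e nl nc] by auto
  have ins1: "r Y \<le> r (insert e Y)" if "Y \<subseteq> E - {e}" for Y using mr_mono[OF M, of Y "insert e Y"] that e by blast
  have ins2: "r (insert e Y) \<le> r Y + 1" if "Y \<subseteq> E - {e}" for Y using mr_insert_le[OF M, of Y e] that e by blast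
  have ins3: "1 \<le> r (insert e Y)" if "Y \<subseteq> E - {e}" for Y
  proof -
    have "insert e Y \<subseteq> E" using that e by blast
    then show ?thesis using mr_mono[OF M, of "{e}" "insert e Y"] re by simp
  qed
  have rc: "int (contract_rank r e Y) = int (r (insert e Y)) - 1" if "Y \<subseteq> E - {e}" for Y
    using ins3[OF that] re by (simp add: contract_rank_def of_nat_diff)
  have EE: "insert e (E - {e}) = E" using e by blast
  have rcE: "int (contract_rank r e (E - {e})) = int (r E) - 1" using rc[of "E - {e}"] EE by simp
  show ?thesis
  proof (rule set_eqI, rule iffI)
    fix z assume z: "z \<in> Lset E r t u"
    define k where "k = z e"
    define z' where "z' = z(e := 0)"
    have z'0: "z' e = 0" by (simp add: z'_def)
    have zz: "z = z'(e := k)" by (simp add: z'_def k_def)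
    have F: "(\<forall>a. a \<notin> E - {e} \<longrightarrow> z' a = 0) \<and>
     (\<Sum>a\<in>E - {e}. z' a) + k = int (r E) + int u - int t \<and>
     (\<forall>Y. Y \<subseteq> E - {e} \<longrightarrow> (\<Sum>a\<in>Y. z' a) \<le> int (r Y) + int u \<and>
                             (\<Sum>a\<in>Y. z' a) + k \<le> int (r (insert e Y)) + int u)"
      using fiber[of E r e z' k t u, OF M e z'0] z zz by simp
    then have F1: "\<forall>a. a \<notin> E - {e} \<longrightarrow> z' a = 0" and F2: "(\<Sum>a\<in>E - {e}. z' a) + k = int (r E) + int u - int t"
      and F3: "\<And>Y. Y \<subseteq> E - {e} \<Longrightarrow> (\<Sum>a\<in>Y. z' a) \<le> int (r Y) + int u"
      and F4: "\<And>Y. Y \<subseteq> E - {e} \<Longrightarrow> (\<Sum>a\<in>Y. z' a) + k \<le> int (r (insert e Y)) + int u" by auto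
    have bE: "(\<Sum>a\<in>E - {e}. z' a) \<le> int (r (E - {e})) + int u" using F3 by blast
    have b0: "k \<le> 1 + int u" using F4[of "{}"] re by simp
    show "z \<in> (\<Union>s\<in>{..t}. (\<lambda>z. z(e := int s - int t)) ` Lset (E - {e}) r s u) \<union>
     (\<Union>v\<in>{..u}. (\<lambda>z. z(e := int u + 1 - int v)) ` Lset (E - {e}) (contract_rank r e) t v)"
    proof (cases "k \<le> 0")
      case True
      define s where "s = nat (int t + k)"
      have s1: "int s = int t + k" using F2 bE rE True by (simp add: s_def)
      have s2: "s \<le> t" using s1 True by linarith
      have "z' \<in> Lset (E - {e}) r s u" unfolding Lset_def using F1 F2 F3 rE s1 by auto
      moreover have "z = z'(e := int s - int t)" using zz s1 by simp
      ultimately show ?thesis using s2 by blast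
    next
      case False
      define v where "v = nat (int u + 1 - k)"
      have v1: "int v = int u + 1 - k" using b0 by (simp add: v_def)
      have v2: "v \<le> u" using v1 False by linarith
      have "z' \<in> Lset (E - {e}) (contract_rank r e) t v" unfolding Lset_def
      proof (intro CollectI conjI allI impI)
        show "\<And>a. a \<notin> E - {e} \<Longrightarrow> z' a = 0" using F1 by blast
        show "(\<Sum>a\<in>E - {e}. z' a) = int (contract_rank r e (E - {e})) + int v - int t"
          using F2 rcE v1 by simp
        fix X assume X: "X \<subseteq> E - {e}"
        show "(\<Sum>a\<in>X. z' a) \<le> int (contract_rank r e X) + int v" using F4[OF X] rc[OF X] v1 by simp
      qed
      moreover have "z = z'(e := int u + 1 - int v)" using zz v1 by simp
      ultimately show ?thesis using v2 by blast
    qed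
  next
    fix z assume "z \<in> (\<Union>s\<in>{..t}. (\<lambda>z. z(e := int s - int t)) ` Lset (E - {e}) r s u) \<union>
     (\<Union>v\<in>{..u}. (\<lambda>z. z(e := int u + 1 - int v)) ` Lset (E - {e}) (contract_rank r e) t v)"
    then consider (d) s z' where "s \<le> t" "z' \<in> Lset (E - {e}) r s u" "z = z'(e := int s - int t)"
      | (c) v z' where "v \<le> u" "z' \<in> Lset (E - {e}) (contract_rank r e) t v" "z = z'(e := int u + 1 - int v)"
      by blast
    then show "z \<in> Lset E r t u"
    proof cases
      case d
      have L: "\<forall>a. a \<notin> E - {e} \<longrightarrow> z' a = 0" "(\<Sum>a\<in>E - {e}. z' a) = int (r (E - {e})) + int u - int s"
        "\<And>X. X \<subseteq> E - {e} \<Longrightarrow> (\<Sum>a\<in>X. z' a) \<le> int (r X) + int u" using d(2) by (auto simp: Lset_def)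
      have z'0: "z' e = 0" using L(1) by blast
      show ?thesis unfolding d(3) fiber[of E r e z', OF M e z'0]
      proof (intro conjI allI impI)
        show "\<And>a. a \<notin> E - {e} \<Longrightarrow> z' a = 0" using L(1) by blast
        show "(\<Sum>a\<in>E - {e}. z' a) + (int s - int t) = int (r E) + int u - int t" using L(2) rE by simp
        fix Y assume Y: "Y \<subseteq> E - {e}"
        show "(\<Sum>a\<in>Y. z' a) \<le> int (r Y) + int u" using L(3)[OF Y] .
        show "(\<Sum>a\<in>Y. z' a) + (int s - int t) \<le> int (r (insert e Y)) + int u"
          using L(3)[OF Y] ins1[OF Y] d(1) by linarith
      qed
    next
      case c
      have L: "\<forall>a. a \<notin> E - {e} \<longrightarrow> z' a = 0"
        "(\<Sum>a\<in>E - {e}. z' a) = int (contract_rank r e (E - {e})) + int v - int t"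
        "\<And>X. X \<subseteq> E - {e} \<Longrightarrow> (\<Sum>a\<in>X. z' a) \<le> int (contract_rank r e X) + int v"
        using c(2) by (auto simp: Lset_def)
      have z'0: "z' e = 0" using L(1) by blast
      show ?thesis unfolding c(3) fiber[of E r e z', OF M e z'0]
      proof (intro conjI allI impI)
        show "\<And>a. a \<notin> E - {e} \<Longrightarrow> z' a = 0" using L(1) by blast
        show "(\<Sum>a\<in>E - {e}. z' a) + (int u + 1 - int v) = int (r E) + int u - int t" using L(2) rcE by simp
        fix Y assume Y: "Y \<subseteq> E - {e}"
        show "(\<Sum>a\<in>Y. z' a) \<le> int (r Y) + int u"
          using L(3)[OF Y] rc[OF Y] ins2[OF Y] c(1) by linarith
        show "(\<Sum>a\<in>Y. z' a) + (int u + 1 - int v) \<le> int (r (insert e Y)) + int u"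
          using L(3)[OF Y] rc[OF Y] by linarith
      qed
    qed
  qed
qed

lemma rec_lc: assumes M: "matroid_rank E r" and e: "e \<in> E"
  and d: "\<And>Y. Y \<subseteq> E - {e} \<Longrightarrow> r (insert e Y) = r Y + d"
  shows "Lset E r t u = (\<Union>s\<in>{..t}. (\<lambda>z. z(e := int s - int t + int d)) ` Lset (E - {e}) r s u) \<union>
     (\<Union>v\<in>{..<u}. (\<lambda>z. z(e := int u + int d - int v)) ` Lset (E - {e}) r t v)"
proof -
  have EE: "insert e (E - {e}) = E" using e by blast
  have rE: "r E = r (E - {e}) + d" using d[of "E - {e}"] EE by simp
  have re: "r {e} = d" using d[of "{}"] mr_empty[OF M] by simp
  show ?thesis
  proof (rule set_eqI, rule iffI)
    fix z assume z: "z \<in> Lset E r t u"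
    define k where "k = z e"
    define z' where "z' = z(e := 0)"
    have z'0: "z' e = 0" by (simp add: z'_def)
    have zz: "z = z'(e := k)" by (simp add: z'_def k_def)
    have F: "(\<forall>a. a \<notin> E - {e} \<longrightarrow> z' a = 0) \<and>
     (\<Sum>a\<in>E - {e}. z' a) + k = int (r E) + int u - int t \<and>
     (\<forall>Y. Y \<subseteq> E - {e} \<longrightarrow> (\<Sum>a\<in>Y. z' a) \<le> int (r Y) + int u \<and>
                             (\<Sum>a\<in>Y. z' a) + k \<le> int (r (insert e Y)) + int u)"
      using fiber[of E r e z' k t u, OF M e z'0] z zz by simp
    then have F1: "\<forall>a. a \<notin> E - {e} \<longrightarrow> z' a = 0" and F2: "(\<Sum>a\<in>E - {e}. z' a) + k = int (r E) + int u - int t"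
      and F3: "\<And>Y. Y \<subseteq> E - {e} \<Longrightarrow> (\<Sum>a\<in>Y. z' a) \<le> int (r Y) + int u"
      and F4: "\<And>Y. Y \<subseteq> E - {e} \<Longrightarrow> (\<Sum>a\<in>Y. z' a) + k \<le> int (r (insert e Y)) + int u" by auto
    have bE: "(\<Sum>a\<in>E - {e}. z' a) \<le> int (r (E - {e})) + int u" using F3 by blast
    have b0: "k \<le> int d + int u" using F4[of "{}"] re by simp
    show "z \<in> (\<Union>s\<in>{..t}. (\<lambda>z. z(e := int s - int t + int d)) ` Lset (E - {e}) r s u) \<union>
     (\<Union>v\<in>{..<u}. (\<lambda>z. z(e := int u + int d - int v)) ` Lset (E - {e}) r t v)"
    proof (cases "k \<le> int d")
      case True
      define s where "s = nat (int t + k - int d)"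
      have s1: "int s = int t + k - int d" using F2 bE rE True by (simp add: s_def)
      have s2: "s \<le> t" using s1 True by linarith
      have "z' \<in> Lset (E - {e}) r s u" unfolding Lset_def using F1 F2 F3 rE s1 by auto
      moreover have "z = z'(e := int s - int t + int d)" using zz s1 by simp
      ultimately show ?thesis using s2 by blast
    next
      case False
      define v where "v = nat (int u + int d - k)"
      have v1: "int v = int u + int d - k" using b0 by (simp add: v_def)
      have v2: "v < u" using v1 False by linarith
      have "z' \<in> Lset (E - {e}) r t v" unfolding Lset_def
      proof (intro CollectI conjI allI impI)
        show "\<And>a. a \<notin> E - {e} \<Longrightarrow> z' a = 0" using F1 by blast
        show "(\<Sum>a\<in>E - {e}. z' a) = int (r (E - {e})) + int v - int t"
          using F2 rE v1 by simp
        fix X assume X: "X \<subseteq> E - {e}"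
        show "(\<Sum>a\<in>X. z' a) \<le> int (r X) + int v" using F4[OF X] d[OF X] v1 by simp
      qed
      moreover have "z = z'(e := int u + int d - int v)" using zz v1 by simp
      ultimately show ?thesis using v2 by blast
    qed
  next
    fix z assume "z \<in> (\<Union>s\<in>{..t}. (\<lambda>z. z(e := int s - int t + int d)) ` Lset (E - {e}) r s u) \<union>
     (\<Union>v\<in>{..<u}. (\<lambda>z. z(e := int u + int d - int v)) ` Lset (E - {e}) r t v)"
    then consider (a) s z' where "s \<le> t" "z' \<in> Lset (E - {e}) r s u" "z = z'(e := int s - int t + int d)"
      | (b) v z' where "v < u" "z' \<in> Lset (E - {e}) r t v" "z = z'(e := int u + int d - int v)"
      by blast
    then show "z \<in> Lset E r t u"
    proof cases
      case a
      have L: "\<forall>a. a \<notin> E - {e} \<longrightarrow> z' a = 0" "(\<Sum>a\<in>E - {e}. z' a) = int (r (E - {e})) + int u - int s"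
        "\<And>X. X \<subseteq> E - {e} \<Longrightarrow> (\<Sum>a\<in>X. z' a) \<le> int (r X) + int u" using a(2) by (auto simp: Lset_def)
      have z'0: "z' e = 0" using L(1) by blast
      show ?thesis unfolding a(3) fiber[of E r e z', OF M e z'0]
      proof (intro conjI allI impI)
        show "\<And>a. a \<notin> E - {e} \<Longrightarrow> z' a = 0" using L(1) by blast
        show "(\<Sum>a\<in>E - {e}. z' a) + (int s - int t + int d) = int (r E) + int u - int t" using L(2) rE by simp
        fix Y assume Y: "Y \<subseteq> E - {e}"
        show "(\<Sum>a\<in>Y. z' a) \<le> int (r Y) + int u" using L(3)[OF Y] .
        show "(\<Sum>a\<in>Y. z' a) + (int s - int t + int d) \<le> int (r (insert e Y)) + int u"
          using L(3)[OF Y] d[OF Y] a(1) by simp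
      qed
    next
      case b
      have L: "\<forall>a. a \<notin> E - {e} \<longrightarrow> z' a = 0"
        "(\<Sum>a\<in>E - {e}. z' a) = int (r (E - {e})) + int v - int t"
        "\<And>X. X \<subseteq> E - {e} \<Longrightarrow> (\<Sum>a\<in>X. z' a) \<le> int (r X) + int v"
        using b(2) by (auto simp: Lset_def)
      have z'0: "z' e = 0" using L(1) by blast
      show ?thesis unfolding b(3) fiber[of E r e z', OF M e z'0]
      proof (intro conjI allI impI)
        show "\<And>a. a \<notin> E - {e} \<Longrightarrow> z' a = 0" using L(1) by blast
        show "(\<Sum>a\<in>E - {e}. z' a) + (int u + int d - int v) = int (r E) + int u - int t" using L(2) rE by simp
        fix Y assume Y: "Y \<subseteq> E - {e}"
        show "(\<Sum>a\<in>Y. z' a) \<le> int (r Y) + int u" using L(3)[OF Y] b(1) by linarith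
        show "(\<Sum>a\<in>Y. z' a) + (int u + int d - int v) \<le> int (r (insert e Y)) + int u"
          using L(3)[OF Y] d[OF Y] by simp
      qed
    qed
  qed
qed

lemma Lset_zero: "z \<in> Lset (E - {e}) r t u \<Longrightarrow> z e = 0"
  by (simp add: Lset_def)

lemma count_nlc: assumes M: "matroid_rank E r" and e: "e \<in> E" and nl: "\<not> is_loop E r e" and nc: "\<not> is_coloop E r e"
  shows "card (Lset E r t u) = (\<Sum>s\<in>{..t}. card (Lset (E - {e}) r s u)) +
     (\<Sum>v\<in>{..u}. card (Lset (E - {e}) (contract_rank r e) t v))"
proof (rule card_split[OF rec_nlc[OF M e nl nc]])
  have M1: "matroid_rank (E - {e}) r" using mr_restrict[OF M] by blast
  have M2: "matroid_rank (E - {e}) (contract_rank r e)" using mr_contract[OF M e] .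
  show "finite {..t}" "finite {..u}" by auto
  show "inj_on (\<lambda>s. int s - int t) {..t}" by (rule inj_onI) simp
  show "inj_on (\<lambda>v. int u + 1 - int v) {..u}" by (rule inj_onI) simp
  show "\<forall>s\<in>{..t}. \<forall>v\<in>{..u}. int s - int t \<noteq> int u + 1 - int v" by auto
  show "\<forall>s\<in>{..t}. finite (Lset (E - {e}) r s u) \<and> (\<forall>z\<in>Lset (E - {e}) r s u. z e = 0)"
    using Lset_finite[OF M1] by (auto simp: Lset_def)
  show "\<forall>v\<in>{..u}. finite (Lset (E - {e}) (contract_rank r e) t v) \<and> (\<forall>z\<in>Lset (E - {e}) (contract_rank r e) t v. z e = 0)"
    using Lset_finite[OF M2] by (auto simp: Lset_def)
qed

lemma count_lc: assumes M: "matroid_rank E r" and e: "e \<in> E"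
  and d: "\<And>Y. Y \<subseteq> E - {e} \<Longrightarrow> r (insert e Y) = r Y + d"
  shows "card (Lset E r t u) = (\<Sum>s\<in>{..t}. card (Lset (E - {e}) r s u)) +
     (\<Sum>v\<in>{..<u}. card (Lset (E - {e}) r t v))"
proof (rule card_split[OF rec_lc[OF M e d]])
  have M1: "matroid_rank (E - {e}) r" using mr_restrict[OF M] by blast
  show "finite {..t}" "finite {..<u}" by auto
  show "inj_on (\<lambda>s. int s - int t + int d) {..t}" by (rule inj_onI) simp
  show "inj_on (\<lambda>v. int u + int d - int v) {..<u}" by (rule inj_onI) simp
  show "\<forall>s\<in>{..t}. \<forall>v\<in>{..<u}. int s - int t + int d \<noteq> int u + int d - int v" by auto
  show "\<forall>s\<in>{..t}. finite (Lset (E - {e}) r s u) \<and> (\<forall>z\<in>Lset (E - {e}) r s u. z e = 0)"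
    using Lset_finite[OF M1] by (auto simp: Lset_def)
  show "\<forall>v\<in>{..<u}. finite (Lset (E - {e}) r t v) \<and> (\<forall>z\<in>Lset (E - {e}) r t v. z e = 0)"
    using Lset_finite[OF M1] by (auto simp: Lset_def)
qed

lemma lc_d: assumes M: "matroid_rank E r" and e: "e \<in> E" and lc: "is_loop E r e \<or> is_coloop E r e"
  shows "\<exists>d. \<forall>Y. Y \<subseteq> E - {e} \<longrightarrow> r (insert e Y) = r Y + d"
proof (cases "is_loop E r e")
  case True
  then show ?thesis using loop_ins[OF M True] by (intro exI[of _ 0]) auto
next
  case False
  then have "is_coloop E r e" using lc by blast
  then show ?thesis using coloop_ins[OF M] by blast
qed

lemma card_Em: assumes "finite E" "card E \<ge> 2" "e \<in> E" shows "E - {e} \<noteq> {}" "card (E - {e}) < card E"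
proof -
  have c: "card (E - {e}) = card E - 1" using assms by simp
  show "E - {e} \<noteq> {}"
  proof
    assume h: "E - {e} = {}"
    have "card (E - {e}) = 0" unfolding h by (rule card.empty)
    then show False using c assms(2) by simp
  qed
  show "card (E - {e}) < card E" using c assms by simp
qed

lemma Qrec_nlc: assumes M: "matroid_rank E r" and c2: "card E \<ge> 2" and e: "e \<in> E"
  and nl: "\<not> is_loop E r e" and nc: "\<not> is_coloop E r e"
  shows "Q_count E r t u = (\<Sum>s\<in>{..t}. Q_count (E - {e}) r s u) +
     (\<Sum>v\<in>{..u}. Q_count (E - {e}) (contract_rank r e) t v)"
proof -
  have ne: "E \<noteq> {}" using e by blast
  have ne': "E - {e} \<noteq> {}" using card_Em[OF mr_finite[OF M] c2 e] by blast
  have M1: "matroid_rank (E - {e}) r" using mr_restrict[OF M] by blast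
  have M2: "matroid_rank (E - {e}) (contract_rank r e)" using mr_contract[OF M e] .
  show ?thesis using count_nlc[OF M e nl nc, of t u] Q_count_L[OF M ne] Q_count_L[OF M1 ne'] Q_count_L[OF M2 ne']
    by simp
qed

lemma Qrec_lc: assumes M: "matroid_rank E r" and c2: "card E \<ge> 2" and e: "e \<in> E"
  and lc: "is_loop E r e \<or> is_coloop E r e"
  shows "Q_count E r t u = (\<Sum>s\<in>{..t}. Q_count (E - {e}) r s u) +
     (\<Sum>v\<in>{..<u}. Q_count (E - {e}) r t v)"
proof -
  have ne: "E \<noteq> {}" using e by blast
  have ne': "E - {e} \<noteq> {}" using card_Em[OF mr_finite[OF M] c2 e] by blast
  have M1: "matroid_rank (E - {e}) r" using mr_restrict[OF M] by blast
  obtain d where d: "\<And>Y. Y \<subseteq> E - {e} \<Longrightarrow> r (insert e Y) = r Y + d" using lc_d[OF M e lc] by blast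
  show ?thesis using count_lc[OF M e d, of t u] Q_count_L[OF M ne] Q_count_L[OF M1 ne']
    by simp
qed

lemma Q_single: assumes M: "matroid_rank E r" and E: "E = {e}"
  shows "Q_count E r t u = 1"
proof -
  have "Lset E r t u = {\<lambda>a. if a = e then int (r E) + int u - int t else 0}"
  proof (rule set_eqI, rule iffI)
    fix z assume z: "z \<in> Lset E r t u"
    then have "z e = int (r E) + int u - int t" "\<forall>a. a \<noteq> e \<longrightarrow> z a = 0" using E by (auto simp: Lset_def)
    then show "z \<in> {\<lambda>a. if a = e then int (r E) + int u - int t else 0}" by auto
  next
    fix z assume "z \<in> {\<lambda>a. if a = e then int (r E) + int u - int t else 0}"
    then have z: "z = (\<lambda>a. if a = e then int (r E) + int u - int t else 0)" by simp
    have "X \<subseteq> {e} \<Longrightarrow> (\<Sum>a\<in>X. z a) \<le> int (r X) + int u" for X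
      using z E by (cases "X = {}") (auto dest!: subset_singletonD)
    then show "z \<in> Lset E r t u" unfolding Lset_def using z E by auto
  qed
  moreover have "E \<noteq> {}" using E by simp
  ultimately show ?thesis using Q_count_L[OF M] by simp
qed

definition gs :: "(nat \<times> nat \<Rightarrow> real) \<Rightarrow> (nat \<times> nat \<Rightarrow> real) \<Rightarrow> real" where
  "gs c g = (\<Sum>p\<in>{p. c p \<noteq> 0}. c p * g p)"

definition prep :: "(nat \<times> nat \<Rightarrow> real) \<Rightarrow> (nat \<Rightarrow> nat \<Rightarrow> nat) \<Rightarrow> bool" where
  "prep c f \<longleftrightarrow> finite {p. c p \<noteq> 0} \<and>
     (\<forall>t u. real (f t u) = gs c (\<lambda>p. real (u choose snd p) * real (t choose fst p)))"

lemma prep_iff: "prep c f \<longleftrightarrow> finite {p. c p \<noteq> 0} \<and>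
     (\<forall>t u. real (f t u) = (\<Sum>p\<in>{p. c p \<noteq> 0}. c p * real (u choose snd p) * real (t choose fst p)))"
  by (simp add: prep_def gs_def mult.assoc)

lemma Q_coeffs_alt: "Q_coeffs E r = (SOME c. prep c (Q_count E r))"
  unfolding Q_coeffs_def prep_iff ..

lemma Q'_alt: "Q' E r x y = gs (Q_coeffs E r) (\<lambda>p. (x - 1) ^ fst p * (y - 1) ^ snd p)"
  by (simp add: Q'_def gs_def mult.assoc Let_def)

lemma gs_super: "finite S \<Longrightarrow> {p. c p \<noteq> 0} \<subseteq> S \<Longrightarrow> gs c g = (\<Sum>p\<in>S. c p * g p)"
  unfolding gs_def by (rule sum.mono_neutral_left) auto

lemma prep_unique: assumes "prep c f" "prep d f" shows "c = d"
proof (rule ccontr)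
  assume ne: "c \<noteq> d"
  define S where "S = {p. c p \<noteq> 0} \<union> {p. d p \<noteq> 0}"
  have fS: "finite S" using assms by (simp add: prep_def S_def)
  define e where "e = (\<lambda>p. c p - d p)"
  have eS: "{p. e p \<noteq> 0} \<subseteq> S" by (auto simp: e_def S_def)
  have zero: "(\<Sum>p\<in>S. e p * (real (u choose snd p) * real (t choose fst p))) = 0" for t u
  proof -
    have "real (f t u) = (\<Sum>p\<in>S. c p * (real (u choose snd p) * real (t choose fst p)))"
      using assms(1) gs_super[OF fS, of c] by (auto simp: prep_def S_def)
    moreover have "real (f t u) = (\<Sum>p\<in>S. d p * (real (u choose snd p) * real (t choose fst p)))"
      using assms(2) gs_super[OF fS, of d] by (auto simp: prep_def S_def)
    ultimately show ?thesis by (simp add: e_def left_diff_distrib sum_subtractf)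
  qed
  obtain q0 where "e q0 \<noteq> 0" using ne by (auto simp: e_def fun_eq_iff)
  then obtain p where p: "e p \<noteq> 0" and pmin: "\<forall>q. e q \<noteq> 0 \<longrightarrow> fst p + snd p \<le> fst q + snd q"
    using ex_has_least_nat[of "\<lambda>p. e p \<noteq> 0" q0 "\<lambda>p. fst p + snd p"] by blast
  have pS: "p \<in> S" using p eS by blast
  have others: "e q * (real (snd p choose snd q) * real (fst p choose fst q)) = 0" if "q \<in> S - {p}" for q
  proof (cases "e q = 0")
    case False
    have "fst p < fst q \<or> snd p < snd q"
    proof (rule ccontr)
      assume "\<not> (fst p < fst q \<or> snd p < snd q)"
      then have "fst q \<le> fst p" "snd q \<le> snd p" by auto
      moreover have "fst p + snd p \<le> fst q + snd q" using pmin False by blast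
      ultimately have "q = p" by (simp add: prod_eq_iff)
      then show False using that by blast
    qed
    then show ?thesis by (auto simp: binomial_eq_0)
  qed simp
  have "(\<Sum>p'\<in>S. e p' * (real (snd p choose snd p') * real (fst p choose fst p'))) =
        e p * (real (snd p choose snd p) * real (fst p choose fst p)) +
        (\<Sum>q\<in>S - {p}. e q * (real (snd p choose snd q) * real (fst p choose fst q)))"
    using sum.remove[OF fS pS] by blast
  also have "(\<Sum>q\<in>S - {p}. e q * (real (snd p choose snd q) * real (fst p choose fst q))) = 0"
    by (intro sum.neutral ballI others)
  finally show False using zero[where t="fst p" and u="snd p"] p by simp
qed

lemma Q_coeffs_eq: assumes "prep c (Q_count E r)" shows "Q_coeffs E r = c"
proof -
  have "prep (Q_coeffs E r) (Q_count E r)" unfolding Q_coeffs_alt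
    using someI[of "\<lambda>c. prep c (Q_count E r)" c] assms by blast
  then show ?thesis using prep_unique assms by blast
qed

lemma Q'_eq: assumes "prep c (Q_count E r)" shows "Q' E r x y = gs c (\<lambda>p. (x - 1) ^ fst p * (y - 1) ^ snd p)"
  using Q_coeffs_eq[OF assms] by (simp add: Q'_alt)

definition sh1 :: "(nat \<times> nat \<Rightarrow> real) \<Rightarrow> nat \<times> nat \<Rightarrow> real" where
  "sh1 a = (\<lambda>p. if fst p = 0 then 0 else a (fst p - 1, snd p))"
definition sh2 :: "(nat \<times> nat \<Rightarrow> real) \<Rightarrow> nat \<times> nat \<Rightarrow> real" where
  "sh2 a = (\<lambda>p. if snd p = 0 then 0 else a (fst p, snd p - 1))"

lemma supp_sh1: "{p. sh1 a p \<noteq> 0} = (\<lambda>p. (Suc (fst p), snd p)) ` {p. a p \<noteq> 0}"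
proof (rule set_eqI, rule iffI)
  fix p assume "p \<in> {p. sh1 a p \<noteq> 0}"
  then have "fst p \<noteq> 0" "a (fst p - 1, snd p) \<noteq> 0" by (auto simp: sh1_def split: if_splits)
  then show "p \<in> (\<lambda>p. (Suc (fst p), snd p)) ` {p. a p \<noteq> 0}"
    by (intro image_eqI[of _ _ "(fst p - 1, snd p)"]) auto
qed (auto simp: sh1_def)

lemma supp_sh2: "{p. sh2 a p \<noteq> 0} = (\<lambda>p. (fst p, Suc (snd p))) ` {p. a p \<noteq> 0}"
proof (rule set_eqI, rule iffI)
  fix p assume "p \<in> {p. sh2 a p \<noteq> 0}"
  then have "snd p \<noteq> 0" "a (fst p, snd p - 1) \<noteq> 0" by (auto simp: sh2_def split: if_splits)
  then show "p \<in> (\<lambda>p. (fst p, Suc (snd p))) ` {p. a p \<noteq> 0}"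
    by (intro image_eqI[of _ _ "(fst p, snd p - 1)"]) auto
qed (auto simp: sh2_def)

lemma gs_sh1: "gs (sh1 a) g = gs a (\<lambda>p. g (Suc (fst p), snd p))"
proof -
  have inj: "inj_on (\<lambda>p. (Suc (fst p), snd p)) {p. a p \<noteq> 0}" by (auto simp: inj_on_def prod_eq_iff)
  show ?thesis unfolding gs_def supp_sh1 sum.reindex[OF inj] by (simp add: sh1_def)
qed

lemma gs_sh2: "gs (sh2 a) g = gs a (\<lambda>p. g (fst p, Suc (snd p)))"
proof -
  have inj: "inj_on (\<lambda>p. (fst p, Suc (snd p))) {p. a p \<noteq> 0}" by (auto simp: inj_on_def prod_eq_iff)
  show ?thesis unfolding gs_def supp_sh2 sum.reindex[OF inj] by (simp add: sh2_def)
qed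

lemma fin_sh1: "finite {p. a p \<noteq> 0} \<Longrightarrow> finite {p. sh1 a p \<noteq> 0}" by (simp add: supp_sh1)
lemma fin_sh2: "finite {p. a p \<noteq> 0} \<Longrightarrow> finite {p. sh2 a p \<noteq> 0}" by (simp add: supp_sh2)

lemma fin_add: "finite {p. a p \<noteq> 0} \<Longrightarrow> finite {p. b p \<noteq> 0} \<Longrightarrow> finite {p. a p + b p \<noteq> (0::real)}"
  by (rule finite_subset[of _ "{p. a p \<noteq> 0} \<union> {p. b p \<noteq> 0}"]) auto

lemma gs_add: assumes "finite {p. a p \<noteq> 0}" "finite {p. b p \<noteq> 0}"
  shows "gs (\<lambda>p. a p + b p) g = gs a g + gs b g"
proof -
  let ?S = "{p. a p \<noteq> 0} \<union> {p. b p \<noteq> 0}"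
  have f: "finite ?S" using assms by simp
  have "gs (\<lambda>p. a p + b p) g = (\<Sum>p\<in>?S. (a p + b p) * g p)" by (rule gs_super[OF f]) auto
  also have "\<dots> = (\<Sum>p\<in>?S. a p * g p) + (\<Sum>p\<in>?S. b p * g p)" by (simp add: distrib_right sum.distrib)
  also have "(\<Sum>p\<in>?S. a p * g p) = gs a g" by (rule gs_super[OF f, symmetric]) auto
  also have "(\<Sum>p\<in>?S. b p * g p) = gs b g" by (rule gs_super[OF f, symmetric]) auto
  finally show ?thesis .
qed

lemma gs_scale: "gs a (\<lambda>p. k * g p) = k * gs a g"
  by (simp add: gs_def sum_distrib_left mult.left_commute)

lemma gs_sum: "gs a (\<lambda>p. \<Sum>s\<in>A. g s p) = (\<Sum>s\<in>A. gs a (g s))"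
  by (simp add: gs_def sum_distrib_left sum.swap[of _ A])

lemma prep_add: assumes "prep a F" "prep b G" shows "prep (\<lambda>p. a p + b p) (\<lambda>t u. F t u + G t u)"
proof -
  have fa: "finite {p. a p \<noteq> 0}" and fb: "finite {p. b p \<noteq> 0}" using assms by (auto simp: prep_def)
  show ?thesis using fin_add[OF fa fb] assms unfolding prep_def by (simp add: gs_add[OF fa fb])
qed

lemma sum_choose_less: "(\<Sum>s<t. real (s choose i)) = real (t choose Suc i)"
proof (cases t)
  case 0 then show ?thesis by simp
next
  case (Suc n)
  have "(\<Sum>s<Suc n. s choose i) = Suc n choose Suc i"
    by (simp only: lessThan_Suc_atMost sum_choose_upper)
  then show ?thesis using Suc by (metis of_nat_sum)
qed

lemma prep_sh1: assumes "prep a F" shows "prep (sh1 a) (\<lambda>t u. \<Sum>s<t. F s u)"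
  unfolding prep_def
proof (intro conjI allI)
  show "finite {p. sh1 a p \<noteq> 0}" using assms fin_sh1 by (simp add: prep_def)
  fix t u
  have "real (\<Sum>s<t. F s u) = (\<Sum>s<t. gs a (\<lambda>p. real (u choose snd p) * real (s choose fst p)))"
    using assms by (simp add: prep_def)
  also have "\<dots> = gs a (\<lambda>p. \<Sum>s<t. real (u choose snd p) * real (s choose fst p))" by (simp add: gs_sum)
  also have "\<dots> = gs a (\<lambda>p. real (u choose snd p) * real (t choose Suc (fst p)))"
    by (simp add: sum_distrib_left[symmetric] sum_choose_less)
  also have "\<dots> = gs (sh1 a) (\<lambda>p. real (u choose snd p) * real (t choose fst p))" by (simp add: gs_sh1)
  finally show "real (\<Sum>s<t. F s u) = gs (sh1 a) (\<lambda>p. real (u choose snd p) * real (t choose fst p))" .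
qed

lemma prep_sh2: assumes "prep a F" shows "prep (sh2 a) (\<lambda>t u. \<Sum>v<u. F t v)"
  unfolding prep_def
proof (intro conjI allI)
  show "finite {p. sh2 a p \<noteq> 0}" using assms fin_sh2 by (simp add: prep_def)
  fix t u
  have "real (\<Sum>v<u. F t v) = (\<Sum>v<u. gs a (\<lambda>p. real (v choose snd p) * real (t choose fst p)))"
    using assms by (simp add: prep_def)
  also have "\<dots> = gs a (\<lambda>p. \<Sum>v<u. real (v choose snd p) * real (t choose fst p))" by (simp add: gs_sum)
  also have "\<dots> = gs a (\<lambda>p. real (u choose Suc (snd p)) * real (t choose fst p))"
    by (simp add: sum_distrib_right[symmetric] sum_choose_less)
  also have "\<dots> = gs (sh2 a) (\<lambda>p. real (u choose snd p) * real (t choose fst p))" by (simp add: gs_sh2)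
  finally show "real (\<Sum>v<u. F t v) = gs (sh2 a) (\<lambda>p. real (u choose snd p) * real (t choose fst p))" .
qed

lemma prep_cong: "prep c f \<Longrightarrow> (\<And>t u. f t u = g t u) \<Longrightarrow> prep c g"
  by (simp add: prep_def)

lemma sum_atMost_split: fixes f :: "nat \<Rightarrow> nat" shows "(\<Sum>s\<in>{..t}. f s) = f t + (\<Sum>s<t. f s)"
  using sum.lessThan_Suc[of f t] by (simp add: lessThan_Suc_atMost)

definition cnlc where "cnlc a b = (\<lambda>p. (a p + sh1 a p) + (b p + sh2 b p))"
definition clc where "clc a = (\<lambda>p. (a p + sh1 a p) + sh2 a p)"

lemma prep_nlc: assumes M: "matroid_rank E r" and c2: "card E \<ge> 2" and e: "e \<in> E"
  and nl: "\<not> is_loop E r e" and nc: "\<not> is_coloop E r e"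
  and a: "prep a (Q_count (E - {e}) r)" and b: "prep b (Q_count (E - {e}) (contract_rank r e))"
  shows "prep (cnlc a b) (Q_count E r)"
proof -
  have "prep (cnlc a b) (\<lambda>t u. (Q_count (E - {e}) r t u + (\<Sum>s<t. Q_count (E - {e}) r s u)) +
     (Q_count (E - {e}) (contract_rank r e) t u + (\<Sum>v<u. Q_count (E - {e}) (contract_rank r e) t v)))"
    unfolding cnlc_def by (intro prep_add prep_sh1 prep_sh2 a b)
  then show ?thesis by (rule prep_cong) (simp add: Qrec_nlc[OF M c2 e nl nc] sum_atMost_split)
qed

lemma prep_lc: assumes M: "matroid_rank E r" and c2: "card E \<ge> 2" and e: "e \<in> E"
  and lc: "is_loop E r e \<or> is_coloop E r e"
  and a: "prep a (Q_count (E - {e}) r)"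
  shows "prep (clc a) (Q_count E r)"
proof -
  have "prep (clc a) (\<lambda>t u. (Q_count (E - {e}) r t u + (\<Sum>s<t. Q_count (E - {e}) r s u)) +
     (\<Sum>v<u. Q_count (E - {e}) r t v))"
    unfolding clc_def by (intro prep_add prep_sh1 prep_sh2 a)
  then show ?thesis by (rule prep_cong) (simp add: Qrec_lc[OF M c2 e lc] sum_atMost_split)
qed

lemma prep_single: "prep (\<lambda>p. if p = (0, 0) then 1 else 0) (\<lambda>t u. 1)"
proof -
  have s: "{p. (if p = (0::nat, 0::nat) then 1 else 0) \<noteq> (0::real)} = {(0, 0)}" by auto
  show ?thesis unfolding prep_def gs_def s by simp
qed

lemma poly_exists: "matroid_rank E r \<Longrightarrow> E \<noteq> {} \<Longrightarrow> \<exists>c. prep c (Q_count E r)"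
proof (induction "card E" arbitrary: E r rule: less_induct)
  case less
  have fE: "finite E" using mr_finite[OF less.prems(1)] .
  obtain e where e: "e \<in> E" using less.prems(2) by blast
  show ?case
  proof (cases "card E \<ge> 2")
    case False
    then have "card E = 1" using fE less.prems(2) by (metis One_nat_def card_0_eq less_2_cases not_le)
    then obtain x where Ex: "E = {x}" using card_1_singletonE by blast
    have "prep (\<lambda>p. if p = (0, 0) then 1 else 0) (Q_count E r)"
      by (rule prep_cong[OF prep_single]) (simp add: Q_single[OF less.prems(1) Ex])
    then show ?thesis by blast
  next
    case True
    have ne': "E - {e} \<noteq> {}" and lt: "card (E - {e}) < card E" using card_Em[OF fE True e] by auto
    have M1: "matroid_rank (E - {e}) r" using mr_restrict[OF less.prems(1)] by blast
    have M2: "matroid_rank (E - {e}) (contract_rank r e)" using mr_contract[OF less.prems(1) e] .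
    obtain a where a: "prep a (Q_count (E - {e}) r)" using less.hyps[OF lt M1 ne'] by blast
    obtain b where b: "prep b (Q_count (E - {e}) (contract_rank r e))" using less.hyps[OF lt M2 ne'] by blast
    show ?thesis
    proof (cases "is_loop E r e \<or> is_coloop E r e")
      case True2: True
      show ?thesis using prep_lc[OF less.prems(1) True e True2 a] by blast
    next
      case False
      then show ?thesis using prep_nlc[OF less.prems(1) True e _ _ a b] by blast
    qed
  qed
qed

lemma gs_nlc: assumes "finite {p. a p \<noteq> 0}" "finite {p. b p \<noteq> 0}"
  shows "gs (cnlc a b) (\<lambda>p. (x - 1) ^ fst p * (y - 1) ^ snd p) =
     x * gs a (\<lambda>p. (x - 1) ^ fst p * (y - 1) ^ snd p) + y * gs b (\<lambda>p. (x - 1) ^ fst p * (y - 1) ^ snd p)"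
proof -
  let ?G = "\<lambda>p. (x - 1) ^ fst p * (y - 1) ^ snd p"
  have "gs (cnlc a b) ?G = (gs a ?G + gs (sh1 a) ?G) + (gs b ?G + gs (sh2 b) ?G)"
    unfolding cnlc_def using assms
    by (simp add: gs_add fin_add fin_sh1 fin_sh2)
  also have "gs (sh1 a) ?G = (x - 1) * gs a ?G"
    by (simp add: gs_sh1 gs_scale[symmetric] mult.assoc)
  also have "gs (sh2 b) ?G = (y - 1) * gs b ?G"
    by (simp add: gs_sh2 gs_scale[symmetric] mult_ac)
  finally show ?thesis by (simp add: algebra_simps)
qed

lemma gs_lc: assumes "finite {p. a p \<noteq> 0}"
  shows "gs (clc a) (\<lambda>p. (x - 1) ^ fst p * (y - 1) ^ snd p) =
     (x + y - 1) * gs a (\<lambda>p. (x - 1) ^ fst p * (y - 1) ^ snd p)"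
proof -
  let ?G = "\<lambda>p. (x - 1) ^ fst p * (y - 1) ^ snd p"
  have "gs (clc a) ?G = (gs a ?G + gs (sh1 a) ?G) + gs (sh2 a) ?G"
    unfolding clc_def using assms
    by (simp add: gs_add fin_add fin_sh1 fin_sh2)
  also have "gs (sh1 a) ?G = (x - 1) * gs a ?G"
    by (simp add: gs_sh1 gs_scale[symmetric] mult.assoc)
  also have "gs (sh2 a) ?G = (y - 1) * gs a ?G"
    by (simp add: gs_sh2 gs_scale[symmetric] mult_ac)
  finally show ?thesis by (simp add: algebra_simps)
qed

lemma contract_eq_lc: assumes M: "matroid_rank E r" and e: "e \<in> E" and lc: "is_loop E r e \<or> is_coloop E r e"
  shows "Q' (E - {e}) (contract_rank r e) x y = Q' (E - {e}) (delete_rank r e) x y"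
proof -
  obtain d where d: "\<And>Y. Y \<subseteq> E - {e} \<Longrightarrow> r (insert e Y) = r Y + d" using lc_d[OF M e lc] by blast
  have re: "r {e} = d" using d[of "{}"] mr_empty[OF M] by simp
  have rc: "contract_rank r e Y = r Y" if "Y \<subseteq> E - {e}" for Y
    using d[OF that] re by (simp add: contract_rank_def)
  have "bases (E - {e}) (contract_rank r e) = bases (E - {e}) r"
    unfolding bases_def using rc by (auto simp: rc[of "E - {e}"])
  then have "Q_count (E - {e}) (contract_rank r e) = Q_count (E - {e}) r"
    by (simp add: Q_count_def base_polytope_def fun_eq_iff)
  then show ?thesis by (simp add: Q'_def Q_coeffs_def delete_rank_def)
qed

theorem mainTheorem4:
  fixes E :: "'a set" and r :: "'a set \<Rightarrow> nat" and e :: 'a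
  assumes "matroid_rank E r" and "card E \<ge> 2" and "e \<in> E"
  shows "(\<not> is_loop E r e \<and> \<not> is_coloop E r e \<longrightarrow>
            (\<forall>x y. Q' E r x y = x * Q' (E - {e}) (delete_rank r e) x y
                               + y * Q' (E - {e}) (contract_rank r e) x y))
       \<and> (is_loop E r e \<or> is_coloop E r e \<longrightarrow>
            (\<forall>x y. Q' E r x y = (x + y - 1) * Q' (E - {e}) (contract_rank r e) x y
                 \<and> (x + y - 1) * Q' (E - {e}) (contract_rank r e) x y
                     = (x + y - 1) * Q' (E - {e}) (delete_rank r e) x y))"
proof -
  note M = assms(1) and c2 = assms(2) and e = assms(3)
  have fE: "finite E" using mr_finite[OF M] .
  have ne': "E - {e} \<noteq> {}" using card_Em[OF fE c2 e] by auto
  have M1: "matroid_rank (E - {e}) r" using mr_restrict[OF M] by blast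
  have M2: "matroid_rank (E - {e}) (contract_rank r e)" using mr_contract[OF M e] .
  obtain a where a: "prep a (Q_count (E - {e}) r)" using poly_exists[OF M1 ne'] by blast
  obtain b where b: "prep b (Q_count (E - {e}) (contract_rank r e))" using poly_exists[OF M2 ne'] by blast
  have fa: "finite {p. a p \<noteq> 0}" and fb: "finite {p. b p \<noteq> 0}" using a b by (auto simp: prep_def)
  show ?thesis
  proof (intro conjI impI allI)
    fix x y assume nlc: "\<not> is_loop E r e \<and> \<not> is_coloop E r e"
    have p: "prep (cnlc a b) (Q_count E r)" using prep_nlc[OF M c2 e _ _ a b] nlc by blast
    show "Q' E r x y = x * Q' (E - {e}) (delete_rank r e) x y + y * Q' (E - {e}) (contract_rank r e) x y"
      unfolding Q'_eq[OF p] Q'_eq[OF b] delete_rank_def Q'_eq[OF a] gs_nlc[OF fa fb] ..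
  next
    fix x y assume lc: "is_loop E r e \<or> is_coloop E r e"
    have p: "prep (clc a) (Q_count E r)" using prep_lc[OF M c2 e lc a] .
    have eq: "Q' (E - {e}) (contract_rank r e) x y = Q' (E - {e}) (delete_rank r e) x y"
      using contract_eq_lc[OF M e lc] .
    show "Q' E r x y = (x + y - 1) * Q' (E - {e}) (contract_rank r e) x y"
      unfolding eq unfolding Q'_eq[OF p] delete_rank_def Q'_eq[OF a] gs_lc[OF fa] ..
    show "(x + y - 1) * Q' (E - {e}) (contract_rank r e) x y = (x + y - 1) * Q' (E - {e}) (delete_rank r e) x y"
      using eq by simp
  qed
qed

end
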